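(* Let $(D,\mathrm{left},\mathrm{right})$ be an interval domain, $x\in D$ and $p\in\max(D)$. If $x\ll p$ in $D$, then $\mathrm{left}(x)\ll p\ll\mathrm{right}(x)$ in the poset $(\max(D),\le)$.
   Context: For a poset $(P,\sqsubseteq)$: directed sets are nonempty sets in which any two elements have an upper bound in the set; $\bigsqcup S$ is the supremum; $x\ll y$ iff for every directed $S\subseteq P$ with a supremum, $y\sqsubseteq\bigsqcup S$ implies $x\sqsubseteq s$ for some $s\in S$; $\Uparrow x=\{a: x\ll a\}$, $\Downarrow x=\{a:a\ll x\}$. $P$ is continuous if there is $B\subseteq P$ such that for each $x$, $B\cap\Downarrow x$ contains a directed set with supremum $x$; a continuous dcpo is a continuous poset in which every directed set has a supremum. $\max(P)$ is the set of maximal elements, $x\sqcap y$ the infimum of $\{x,y\}$. The Scott topology consists of upper sets $U$ such that $\bigsqcup S\in U$ implies $S\cap U\ne\emptyset$ for directed $S$. An interval poset is a poset $D$ with functions $\mathrm{left},\mathrm{right}:D\to\max(D)$ such that (only named infima are assumed to exist): (i) $x=\mathrm{left}(x)\sqcap\mathrm{right}(x)$ for all $x$; (ii) if $\mathrm{right}(x)=\mathrm{left}(y)$ then $\mathrm{left}(x\sqcap y)=\mathrm{left}(x)$ and $\mathrm{right}(x\sqcap y)=\mathrm{right}(y)$; (iii) for $p\in\max(D)$ with $x\sqsubseteq p$: $\mathrm{left}(\mathrm{left}(x)\sqcap p)=\mathrm{left}(x)$, $\mathrm{right}(\mathrm{left}(x)\sqcap p)=p$, $\mathrm{left}(p\sqcap\mathrm{right}(x))=p$,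 $\mathrm{right}(p\sqcap\mathrm{right}(x))=\mathrm{right}(x)$. On $\max(D)$ define $a\le b$ iff $a=\mathrm{left}(z)$, $b=\mathrm{right}(z)$ for some $z\in D$; this is a partial order, and $\ll$, $\bigvee$, $\bigwedge$ in $(\max(D),\le)$ refer to this order. For $p,q\in\max(D)$ let $[p,\cdot]=\mathrm{left}^{-1}(p)$ and $[\cdot,q]=\mathrm{right}^{-1}(q)$, regarded as subposets of $D$. An interval domain is an interval poset $(D,\mathrm{left},\mathrm{right})$ such that $D$ is a continuous dcpo and: (i) if $p\in\Uparrow x\cap\max(D)$ then $\Uparrow(\mathrm{left}(x)\sqcap p)\ne\emptyset$ and $\Uparrow(p\sqcap\mathrm{right}(x))\ne\emptyset$; (ii) for all $x\in D$ the following are equivalent: (a) $\Uparrow x\ne\emptyset$; (b) for all $y\in[\mathrm{left}(x),\cdot]$ with $y\sqsubseteq x$, $y\ll\mathrm{right}(y)$ in the poset $[\cdot,\mathrm{right}(y)]$; (c) for all $y\in[\cdot,\mathrm{right}(x)]$ with $y\sqsubseteq x$, $y\ll\mathrm{left}(y)$ in the poset $[\mathrm{left}(y),\cdot]$; (iii)(a) for every directed $S\subseteq[p,\cdot]$, $\mathrm{left}(\bigsqcup S)=p$ and $\mathrm{right}(\bigsqcup S)=\mathrm{right}(\bigsqcup T)$ for every directed $T\subseteq[q,\cdot]$ with $\mathrm{right}(T)=\mathrm{right}(S)$ (images); (iii)(b) for every directed $S\subseteq[\cdot,q]$, $\mathrm{right}(\bigsqcup S)=q$ and $\mathrm{left}(\bigsqcup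 S)=\mathrm{left}(\bigsqcup T)$ for every directed $T\subseteq[\cdot,p]$ with $\mathrm{left}(T)=\mathrm{left}(S)$; (iv) for all $x\in D$, $\{y\in\max(D): x\sqsubseteq y\}$ is compact in the relative Scott topology. *)

theory Defs
  imports Main
begin

definition directed_in :: "'a set \<Rightarrow> ('a \<Rightarrow> 'a \<Rightarrow> bool) \<Rightarrow> 'a set \<Rightarrow> bool" where
  "directed_in P R S \<longleftrightarrow> S \<subseteq> P \<and> S \<noteq> {} \<and>
     (\<forall>a\<in>S. \<forall>b\<in>S. \<exists>c\<in>S. R a c \<and> R b c)"

definition is_sup_in :: "'a set \<Rightarrow> ('a \<Rightarrow> 'a \<Rightarrow> bool) \<Rightarrow> 'a set \<Rightarrow> 'a \<Rightarrow> bool" where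
  "is_sup_in P R S s \<longleftrightarrow> s \<in> P \<and> (\<forall>a\<in>S. R a s) \<and>
     (\<forall>u\<in>P. (\<forall>a\<in>S. R a u) \<longrightarrow> R s u)"

definition is_inf_in :: "'a set \<Rightarrow> ('a \<Rightarrow> 'a \<Rightarrow> bool) \<Rightarrow> 'a \<Rightarrow> 'a \<Rightarrow> 'a \<Rightarrow> bool" where
  "is_inf_in P R x y z \<longleftrightarrow> z \<in> P \<and> R z x \<and> R z y \<and>
     (\<forall>u\<in>P. R u x \<and> R u y \<longrightarrow> R u z)"

definition wb_in :: "'a set \<Rightarrow> ('a \<Rightarrow> 'a \<Rightarrow> bool) \<Rightarrow> 'a \<Rightarrow> 'a \<Rightarrow> bool" where
  "wb_in P R x y \<longleftrightarrow> (\<forall>S s. directed_in P R S \<longrightarrow> is_sup_in P R S s \<longrightarrow> R y s \<longrightarrow>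
     (\<exists>a\<in>S. R x a))"

definition Uparrow_in :: "'a set \<Rightarrow> ('a \<Rightarrow> 'a \<Rightarrow> bool) \<Rightarrow> 'a \<Rightarrow> 'a set" where
  "Uparrow_in P R x = {a\<in>P. wb_in P R x a}"

definition Downarrow_in :: "'a set \<Rightarrow> ('a \<Rightarrow> 'a \<Rightarrow> bool) \<Rightarrow> 'a \<Rightarrow> 'a set" where
  "Downarrow_in P R x = {a\<in>P. wb_in P R a x}"

definition maxels :: "'a set \<Rightarrow> ('a \<Rightarrow> 'a \<Rightarrow> bool) \<Rightarrow> 'a set" where
  "maxels P R = {m\<in>P. \<forall>a\<in>P. R m a \<longrightarrow> a = m}"

definition continuous_poset :: "'a set \<Rightarrow> ('a \<Rightarrow> 'a \<Rightarrow> bool) \<Rightarrow> bool" where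
  "continuous_poset P R \<longleftrightarrow> (\<exists>B\<subseteq>P. \<forall>x\<in>P. \<exists>S. S \<subseteq> B \<inter> Downarrow_in P R x \<and>
      directed_in P R S \<and> is_sup_in P R S x)"

definition dcpo :: "'a set \<Rightarrow> ('a \<Rightarrow> 'a \<Rightarrow> bool) \<Rightarrow> bool" where
  "dcpo P R \<longleftrightarrow> (\<forall>S. directed_in P R S \<longrightarrow> (\<exists>s. is_sup_in P R S s))"

definition continuous_dcpo :: "'a set \<Rightarrow> ('a \<Rightarrow> 'a \<Rightarrow> bool) \<Rightarrow> bool" where
  "continuous_dcpo P R \<longleftrightarrow> continuous_poset P R \<and> dcpo P R"

definition scott_open :: "'a set \<Rightarrow> ('a \<Rightarrow> 'a \<Rightarrow> bool) \<Rightarrow> 'a set \<Rightarrow> bool" where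
  "scott_open P R U \<longleftrightarrow> U \<subseteq> P \<and> (\<forall>a\<in>U. \<forall>b\<in>P. R a b \<longrightarrow> b \<in> U) \<and>
     (\<forall>S s. directed_in P R S \<longrightarrow> is_sup_in P R S s \<longrightarrow> s \<in> U \<longrightarrow> S \<inter> U \<noteq> {})"

text \<open>K (a subset of M) is compact in the topology on M induced by the Scott topology of (P,R):
  relative open sets are the sets U \<inter> M with U Scott open.\<close>
definition scott_compact_rel :: "'a set \<Rightarrow> ('a \<Rightarrow> 'a \<Rightarrow> bool) \<Rightarrow> 'a set \<Rightarrow> 'a set \<Rightarrow> bool" where
  "scott_compact_rel P R M K \<longleftrightarrow> K \<subseteq> M \<and>
     (\<forall>\<U>. (\<forall>V\<in>\<U>. \<exists>U. scott_open P R U \<and> V = U \<inter> M) \<and> K \<subseteq> \<Union>\<U> \<longrightarrow>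
        (\<exists>\<F>\<subseteq>\<U>. finite \<F> \<and> K \<subseteq> \<Union>\<F>))"

section \<open>Interval posets and interval domains; D is the whole type with its order\<close>

abbreviation MaxD :: "'a::order set" where
  "MaxD \<equiv> maxels UNIV (\<le>)"

abbreviation infD :: "'a::order \<Rightarrow> 'a \<Rightarrow> 'a \<Rightarrow> bool" where
  "infD x y z \<equiv> is_inf_in UNIV (\<le>) x y z"

definition interval_poset :: "('a::order \<Rightarrow> 'a) \<Rightarrow> ('a \<Rightarrow> 'a) \<Rightarrow> bool" where
  "interval_poset left right \<longleftrightarrow>
     (\<forall>x. left x \<in> MaxD \<and> right x \<in> MaxD) \<and>
     (\<forall>x. infD (left x) (right x) x) \<and>
     (\<forall>x y. right x = left y \<longrightarrow>
        (\<exists>z. infD x y z \<and> left z = left x \<and> right z = right y)) \<and>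
     (\<forall>x p. p \<in> MaxD \<and> x \<le> p \<longrightarrow>
        (\<exists>z. infD (left x) p z \<and> left z = left x \<and> right z = p) \<and>
        (\<exists>z. infD p (right x) z \<and> left z = p \<and> right z = right x))"

text \<open>The order on max(D): a \<le> b iff a = left z and b = right z for some z.\<close>
definition ileq :: "('a \<Rightarrow> 'a) \<Rightarrow> ('a \<Rightarrow> 'a) \<Rightarrow> 'a \<Rightarrow> 'a \<Rightarrow> bool" where
  "ileq left right a b \<longleftrightarrow> (\<exists>z. a = left z \<and> b = right z)"

abbreviation wbD :: "'a::order \<Rightarrow> 'a \<Rightarrow> bool" where
  "wbD x y \<equiv> wb_in UNIV (\<le>) x y"

abbreviation UpD :: "'a::order \<Rightarrow> 'a set" where
  "UpD x \<equiv> Uparrow_in UNIV (\<le>) x"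

definition interval_domain :: "('a::order \<Rightarrow> 'a) \<Rightarrow> ('a \<Rightarrow> 'a) \<Rightarrow> bool" where
  "interval_domain left right \<longleftrightarrow>
     interval_poset left right \<and>
     continuous_dcpo (UNIV :: 'a set) (\<le>) \<and>
     \<comment> \<open>(i)\<close>
     (\<forall>x p. p \<in> UpD x \<inter> MaxD \<longrightarrow>
        (\<forall>z. infD (left x) p z \<longrightarrow> UpD z \<noteq> {}) \<and>
        (\<forall>z. infD p (right x) z \<longrightarrow> UpD z \<noteq> {})) \<and>
     \<comment> \<open>(ii)\<close>
     (\<forall>x. (UpD x \<noteq> {} \<longleftrightarrow>
            (\<forall>y. left y = left x \<and> y \<le> x \<longrightarrow>
               wb_in {z. right z = right y} (\<le>) y (right y))) \<and>
          (UpD x \<noteq> {} \<longleftrightarrow>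
            (\<forall>y. right y = right x \<and> y \<le> x \<longrightarrow>
               wb_in {z. left z = left y} (\<le>) y (left y)))) \<and>
     \<comment> \<open>(iii)(a)\<close>
     (\<forall>p q S s. directed_in UNIV (\<le>) S \<and> S \<subseteq> {z. left z = p} \<and> is_sup_in UNIV (\<le>) S s \<longrightarrow>
        left s = p \<and>
        (\<forall>T t. directed_in UNIV (\<le>) T \<and> T \<subseteq> {z. left z = q} \<and> right ` T = right ` S \<and>
               is_sup_in UNIV (\<le>) T t \<longrightarrow> right s = right t)) \<and>
     \<comment> \<open>(iii)(b)\<close>
     (\<forall>p q S s. directed_in UNIV (\<le>) S \<and> S \<subseteq> {z. right z = q} \<and> is_sup_in UNIV (\<le>) S s \<longrightarrow>
        right s = q \<and>
        (\<forall>T t. directed_in UNIV (\<le>) T \<and> T \<subseteq> {z. right z = p} \<and> left ` T = left ` S \<and>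
               is_sup_in UNIV (\<le>) T t \<longrightarrow> left s = left t)) \<and>
     \<comment> \<open>(iv)\<close>
     (\<forall>x::'a. scott_compact_rel UNIV (\<le>) MaxD {y\<in>MaxD. x \<le> y})"

end

theory Submission
  imports Defs
begin

lemma ip_max: "interval_poset left right \<Longrightarrow> left x \<in> MaxD \<and> right x \<in> MaxD"
  unfolding interval_poset_def by metis

lemma ip_inf: "interval_poset left right \<Longrightarrow> infD (left x) (right x) x"
  unfolding interval_poset_def by metis

lemma ip_join: "interval_poset left right \<Longrightarrow> right x = left y \<Longrightarrow>
   \<exists>z. infD x y z \<and> left z = left x \<and> right z = right y"
  unfolding interval_poset_def by metis

lemma ip_l: "interval_poset left right \<Longrightarrow> p \<in> MaxD \<Longrightarrow> x \<le> p \<Longrightarrow>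
   \<exists>z. infD (left x) p z \<and> left z = left x \<and> right z = p"
  unfolding interval_poset_def by metis

lemma ip_r: "interval_poset left right \<Longrightarrow> p \<in> MaxD \<Longrightarrow> x \<le> p \<Longrightarrow>
   \<exists>z. infD p (right x) z \<and> left z = p \<and> right z = right x"
  unfolding interval_poset_def by metis

lemma L0: assumes "interval_poset left right" "m \<in> MaxD"
  shows "left m = m \<and> right m = m"
proof -
  have "infD (left m) (right m) m" using ip_inf[OF assms(1)] .
  hence "m \<le> left m" "m \<le> right m" unfolding is_inf_in_def by auto
  thus ?thesis using assms(2) unfolding maxels_def by auto
qed

lemma L1: assumes "interval_poset left right" "left z = left w" "right z = right w"
  shows "z = w"
proof -
  have a: "infD (left z) (right z) z" "infD (left w) (right w) w" using ip_inf[OF assms(1)] by auto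
  show ?thesis using a assms(2,3) unfolding is_inf_in_def by (metis UNIV_I order_antisym)
qed

lemma L3: assumes "interval_poset left right" "y \<le> y'"
  shows "ileq left right (left y) (left y') \<and> ileq left right (right y') (right y)"
proof -
  have i: "infD (left y') (right y') y'" using ip_inf[OF assms(1)] .
  hence "y' \<le> left y'" "y' \<le> right y'" unfolding is_inf_in_def by auto
  hence "y \<le> left y'" "y \<le> right y'" using assms(2) by auto
  moreover have "left y' \<in> MaxD" "right y' \<in> MaxD" using ip_max[OF assms(1)] by auto
  ultimately show ?thesis using ip_l[OF assms(1)] ip_r[OF assms(1)] unfolding ileq_def by metis
qed

lemma L4: assumes "interval_poset left right" "right z1 = left z2"
    "left w = left z1" "right w = right z2"
  shows "w \<le> z1 \<and> w \<le> z2"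
proof -
  obtain z where z: "infD z1 z2 z" "left z = left z1" "right z = right z2"
    using ip_join[OF assms(1,2)] by blast
  have "z = w" using L1[OF assms(1)] z assms by auto
  thus ?thesis using z unfolding is_inf_in_def by auto
qed

lemma L4e: assumes "interval_poset left right" "ileq left right a b" "ileq left right b c"
  shows "ileq left right a c"
proof -
  obtain z1 z2 where "a = left z1" "b = right z1" "b = left z2" "c = right z2"
    using assms unfolding ileq_def by blast
  thus ?thesis using ip_join[OF assms(1)] unfolding ileq_def by metis
qed

lemma L5: assumes "interval_poset left right" "ileq left right a b" "ileq left right b a"
  shows "a = b"
proof -
  obtain z1 z2 where z: "a = left z1" "b = right z1" "b = left z2" "a = right z2"
    using assms unfolding ileq_def by blast
  have aM: "a \<in> MaxD" using z ip_max[OF assms(1)] by auto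
  obtain z where zz: "infD z1 z2 z" "left z = a" "right z = a"
    using ip_join[OF assms(1), of z1 z2] z by auto
  have "z = a" using L1[OF assms(1), of z a] zz L0[OF assms(1) aM] by auto
  hence "a \<le> z1" using zz unfolding is_inf_in_def by auto
  hence "z1 = a" using aM unfolding maxels_def by auto
  thus ?thesis using z L0[OF assms(1) aM] by auto
qed

lemma id_ip: "interval_domain left right \<Longrightarrow> interval_poset left right"
  unfolding interval_domain_def by (erule conjunct1)

lemma id_i: "interval_domain left right \<Longrightarrow> p \<in> UpD x \<inter> MaxD \<Longrightarrow>
   (\<forall>z. infD (left x) p z \<longrightarrow> UpD z \<noteq> {}) \<and> (\<forall>z. infD p (right x) z \<longrightarrow> UpD z \<noteq> {})"
  unfolding interval_domain_def
  apply (drule conjunct2, drule conjunct2, drule conjunct1)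
  apply (erule allE[of _ x], erule allE[of _ p])
  apply (erule mp, assumption)
  done

lemma id_ii: "interval_domain left right \<Longrightarrow> UpD Y \<noteq> {} \<Longrightarrow> left y = left Y \<Longrightarrow> y \<le> Y \<Longrightarrow>
   wb_in {z. right z = right y} (\<le>) y (right y)"
  unfolding interval_domain_def
  apply (drule conjunct2, drule conjunct2, drule conjunct2, drule conjunct1)
  apply (erule allE[of _ Y], drule conjunct1)
  apply (drule iffD1, assumption)
  apply (erule allE[of _ y], erule mp)
  apply (rule conjI, assumption, assumption)
  done

lemma KEY:
  assumes D: "interval_domain left right"
    and U: "UpD Y \<noteq> {}"
    and Sd: "directed_in MaxD (ileq left right) S"
    and Ss: "is_sup_in MaxD (ileq left right) S s"
    and rs: "ileq left right (right Y) s"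
  shows "\<exists>a\<in>S. ileq left right (left Y) a"
proof -
  have ip: "interval_poset left right" using id_ip[OF D] .
  have iiB: "\<And>y. left y = left Y \<and> y \<le> Y \<Longrightarrow>
               wb_in {z. right z = right y} (\<le>) y (right y)"
    using id_ii[OF D U] by blast
  obtain v where v: "right Y = left v" "s = right v" using rs unfolding ileq_def by blast
  obtain y2 where y2: "infD Y v y2" "left y2 = left Y" "right y2 = s"
    using ip_join[OF ip v(1)] v by auto
  have "y2 \<le> Y" using L4[OF ip v(1)] y2 v by auto
  hence wb: "wb_in {z. right z = s} (\<le>) y2 s" using iiB[of y2] y2 by auto
  have sM: "s \<in> MaxD" using Ss unfolding is_sup_in_def by auto
  have s0: "left s = s" "right s = s" using L0[OF ip sM] by auto
  define T where "T = {w. right w = s \<and> left w \<in> S}"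
  have ub: "\<And>a. a \<in> S \<Longrightarrow> ileq left right a s" using Ss unfolding is_sup_in_def by auto
  have ex: "\<And>a. a \<in> S \<Longrightarrow> \<exists>w\<in>T. left w = a"
    using ub unfolding T_def ileq_def by auto
  have Td: "directed_in {z. right z = s} (\<le>) T"
    unfolding directed_in_def
  proof (intro conjI ballI)
    show "T \<subseteq> {z. right z = s}" unfolding T_def by auto
    show "T \<noteq> {}" using Sd ex unfolding directed_in_def by blast
  next
    fix w1 w2 assume w: "w1 \<in> T" "w2 \<in> T"
    then obtain c where c: "c \<in> S" "ileq left right (left w1) c" "ileq left right (left w2) c"
      using Sd unfolding directed_in_def T_def by blast
    obtain wc where wc: "wc \<in> T" "left wc = c" using ex c(1) by blast
    have "w1 \<le> wc"
    proof -
      obtain z where "left w1 = left z" "c = right z" using c(2) unfolding ileq_def by blast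
      thus ?thesis using L4[OF ip, of z wc w1] wc w unfolding T_def by auto
    qed
    moreover have "w2 \<le> wc"
    proof -
      obtain z where "left w2 = left z" "c = right z" using c(3) unfolding ileq_def by blast
      thus ?thesis using L4[OF ip, of z wc w2] wc w unfolding T_def by auto
    qed
    ultimately show "\<exists>c\<in>T. w1 \<le> c \<and> w2 \<le> c" using wc by blast
  qed
  have Tsup: "is_sup_in {z. right z = s} (\<le>) T s"
    unfolding is_sup_in_def
  proof (intro conjI ballI impI)
    show "s \<in> {z. right z = s}" using s0 by auto
  next
    fix w assume "w \<in> T"
    hence "right w = s" unfolding T_def by auto
    moreover have "infD (left w) (right w) w" using ip_inf[OF ip] .
    ultimately show "w \<le> s" unfolding is_inf_in_def by auto
  next
    fix u assume u: "u \<in> {z. right z = s}" "\<forall>a\<in>T. a \<le> u"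
    have "\<forall>a\<in>S. ileq left right a (left u)"
    proof
      fix a assume "a \<in> S"
      then obtain w where "w \<in> T" "left w = a" using ex by blast
      thus "ileq left right a (left u)" using u L3[OF ip, of w u] by auto
    qed
    moreover have "left u \<in> MaxD" using ip_max[OF ip] by auto
    ultimately have "ileq left right s (left u)" using Ss unfolding is_sup_in_def by auto
    moreover have "ileq left right (left u) s" using u unfolding ileq_def by auto
    ultimately have "left u = s" using L5[OF ip] by metis
    hence "u = s" using L1[OF ip, of u s] s0 u by auto
    thus "s \<le> u" by simp
  qed
  obtain w where w: "w \<in> T" "y2 \<le> w" using wb Td Tsup unfolding wb_in_def by blast
  have "ileq left right (left y2) (left w)" using L3[OF ip w(2)] by auto
  thus ?thesis using w y2 unfolding T_def by auto
qed

theorem mainTheorem9: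
  fixes left right :: "'a::order \<Rightarrow> 'a" and x p :: 'a
  assumes "interval_domain left right"
    and "p \<in> MaxD"
    and "wbD x p"
  shows "wb_in MaxD (ileq left right) (left x) p \<and> wb_in MaxD (ileq left right) p (right x)"
proof -
  have ip: "interval_poset left right" using id_ip[OF assms(1)] .
  have "directed_in UNIV (\<le>) {p}" "is_sup_in UNIV (\<le>) {p} p"
    unfolding directed_in_def is_sup_in_def by auto
  hence xp: "x \<le> p" using assms(3) unfolding wb_in_def by auto
  have pU: "p \<in> UpD x \<inter> MaxD" using assms(2,3) unfolding Uparrow_in_def by auto
  obtain z1 where z1: "infD (left x) p z1" "left z1 = left x" "right z1 = p"
    using ip_l[OF ip assms(2) xp] by blast
  obtain z2 where z2: "infD p (right x) z2" "left z2 = p" "right z2 = right x"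
    using ip_r[OF ip assms(2) xp] by blast
  have U1: "UpD z1 \<noteq> {}" using id_i[OF assms(1) pU] z1(1) by blast
  have U2: "UpD z2 \<noteq> {}" using id_i[OF assms(1) pU] z2(1) by blast
  show ?thesis
  proof
    show "wb_in MaxD (ileq left right) (left x) p"
      unfolding wb_in_def using KEY[OF assms(1) U1] z1 by auto
    show "wb_in MaxD (ileq left right) p (right x)"
      unfolding wb_in_def using KEY[OF assms(1) U2] z2 by auto
  qed
qed

end
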